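(* Let $\mathbf{X}$ be a real or complex Banach space and let $\mathcal{A}(\mathbf{X})$ be a unital standard operator algebra on $\mathbf{X}$. If $\phi:\mathcal{A}(\mathbf{X})\to\mathcal{A}(\mathbf{X})$ is a linear mapping such that $\phi(A)\circ B+A\circ\phi(B)=0$ for all $A,B\in\mathcal{A}(\mathbf{X})$ with $AB=BA=0$, then there exist a derivation $\delta$ and a multiplier $\eta$ on $\mathcal{A}(\mathbf{X})$ such that $\phi=\delta+\eta$. If moreover $\phi(I)=0$, then $\phi$ is a derivation.
   Context: $\mathcal{B}(\mathbf{X})$ is the algebra of bounded linear operators on $\mathbf{X}$ and $\mathcal{F}(\mathbf{X})$ the ideal of finite rank operators. A subalgebra $\mathcal{A}(\mathbf{X})\subseteq\mathcal{B}(\mathbf{X})$ is standard if $\mathcal{F}(\mathbf{X})\subseteq\mathcal{A}(\mathbf{X})$; unital means it contains the identity $I$. $X\circ Y=XY+YX$. A linear $\delta$ is a derivation if $\delta(XY)=\delta(X)Y+X\delta(Y)$; a linear $\eta$ is a multiplier if $\eta(X)=\eta(I)X=X\eta(I)$ for all $X$. *)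

theory Defs
  imports "HOL-Analysis.Analysis"
begin

text \<open>A real Banach space is a type of class banach.
  A complex Banach space is a real Banach space together with a complex structure J
  (multiplication by i), such that (a + i b) x = a x + b J x has norm |a + i b| * norm x.
  The scalar data is a set C of operators: C = {} (real case) or C = {J} (complex case).
  K-linearity = real linearity plus commuting with every J in C.\<close>

definition complex_structure :: "('a::banach \<Rightarrow> 'a) \<Rightarrow> bool" where
  "complex_structure J \<longleftrightarrow> bounded_linear J \<and> (\<forall>x. J (J x) = - x) \<and>
     (\<forall>a b x. norm (a *\<^sub>R x + b *\<^sub>R J x) = sqrt (a\<^sup>2 + b\<^sup>2) * norm x)"

definition scalar_data :: "('a::banach \<Rightarrow> 'a) set \<Rightarrow> bool" where
  "scalar_data C \<longleftrightarrow> C = {} \<or> (\<exists>J. complex_structure J \<and> C = {J})"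

definition bops :: "('a::banach \<Rightarrow> 'a) set \<Rightarrow> ('a \<Rightarrow> 'a) set" where
  "bops C = {T. bounded_linear T \<and> (\<forall>J\<in>C. T \<circ> J = J \<circ> T)}"

definition fin_rank :: "('a::banach \<Rightarrow> 'a) set \<Rightarrow> ('a \<Rightarrow> 'a) set" where
  "fin_rank C = {T \<in> bops C. \<exists>S. finite S \<and> range T \<subseteq> span S}"

definition unital_standard_algebra :: "('a::banach \<Rightarrow> 'a) set \<Rightarrow> ('a \<Rightarrow> 'a) set \<Rightarrow> bool" where
  "unital_standard_algebra C \<A> \<longleftrightarrow>
     \<A> \<subseteq> bops C \<and> fin_rank C \<subseteq> \<A> \<and> id \<in> \<A> \<and>
     (\<forall>S\<in>\<A>. \<forall>T\<in>\<A>. (\<lambda>x. S x + T x) \<in> \<A>) \<and>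
     (\<forall>S\<in>\<A>. \<forall>T\<in>\<A>. S \<circ> T \<in> \<A>) \<and>
     (\<forall>c. \<forall>T\<in>\<A>. (\<lambda>x. c *\<^sub>R T x) \<in> \<A>) \<and>
     (\<forall>J\<in>C. \<forall>T\<in>\<A>. J \<circ> T \<in> \<A>)"

definition alg_linear :: "('a::banach \<Rightarrow> 'a) set \<Rightarrow> ('a \<Rightarrow> 'a) set \<Rightarrow>
    (('a \<Rightarrow> 'a) \<Rightarrow> ('a \<Rightarrow> 'a)) \<Rightarrow> bool" where
  "alg_linear C \<A> f \<longleftrightarrow> (\<forall>T\<in>\<A>. f T \<in> \<A>) \<and>
     (\<forall>S\<in>\<A>. \<forall>T\<in>\<A>. f (\<lambda>x. S x + T x) = (\<lambda>x. f S x + f T x)) \<and>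
     (\<forall>c. \<forall>T\<in>\<A>. f (\<lambda>x. c *\<^sub>R T x) = (\<lambda>x. c *\<^sub>R f T x)) \<and>
     (\<forall>J\<in>C. \<forall>T\<in>\<A>. f (J \<circ> T) = J \<circ> f T)"

definition jordan :: "('a::banach \<Rightarrow> 'a) \<Rightarrow> ('a \<Rightarrow> 'a) \<Rightarrow> ('a \<Rightarrow> 'a)" where
  "jordan S T = (\<lambda>x. S (T x) + T (S x))"

definition is_derivation :: "('a::banach \<Rightarrow> 'a) set \<Rightarrow> ('a \<Rightarrow> 'a) set \<Rightarrow>
    (('a \<Rightarrow> 'a) \<Rightarrow> ('a \<Rightarrow> 'a)) \<Rightarrow> bool" where
  "is_derivation C \<A> d \<longleftrightarrow> alg_linear C \<A> d \<and>
     (\<forall>S\<in>\<A>. \<forall>T\<in>\<A>. d (S \<circ> T) = (\<lambda>x. d S (T x) + S (d T x)))"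

definition is_multiplier :: "('a::banach \<Rightarrow> 'a) set \<Rightarrow> ('a \<Rightarrow> 'a) set \<Rightarrow>
    (('a \<Rightarrow> 'a) \<Rightarrow> ('a \<Rightarrow> 'a)) \<Rightarrow> bool" where
  "is_multiplier C \<A> m \<longleftrightarrow> alg_linear C \<A> m \<and>
     (\<forall>T\<in>\<A>. m T = m id \<circ> T \<and> m T = T \<circ> m id)"

end

theory Submission
  imports Defs
begin

typedef (overloaded) 'a lop = "{f :: 'a::real_vector \<Rightarrow> 'a. linear f}"
  morphisms app Lop
  by (rule exI[of _ id]) (simp add: linear_id)

setup_lifting type_definition_lop

instantiation lop :: (real_vector) "{real_algebra, monoid_mult}"
begin
lift_definition zero_lop :: "'a lop" is "\<lambda>x. 0" by (rule linear_zero)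
lift_definition one_lop :: "'a lop" is "id" by (rule linear_id)
lift_definition plus_lop :: "'a lop \<Rightarrow> 'a lop \<Rightarrow> 'a lop" is "\<lambda>f g x. f x + g x"
  by (rule linear_compose_add)
lift_definition minus_lop :: "'a lop \<Rightarrow> 'a lop \<Rightarrow> 'a lop" is "\<lambda>f g x. f x - g x"
  by (rule linear_compose_sub)
lift_definition uminus_lop :: "'a lop \<Rightarrow> 'a lop" is "\<lambda>f x. - f x"
  by (rule linear_compose_neg)
lift_definition times_lop :: "'a lop \<Rightarrow> 'a lop \<Rightarrow> 'a lop" is "\<lambda>f g. f \<circ> g"
  by (rule linear_compose)
lift_definition scaleR_lop :: "real \<Rightarrow> 'a lop \<Rightarrow> 'a lop" is "\<lambda>c f x. c *\<^sub>R f x"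
  unfolding linear_iff by (simp add: linear_add linear_scale scaleR_add_right)
instance
  apply standard
  apply (transfer; auto simp: algebra_simps linear_add linear_diff linear_scale)+
  done
end

lemma app_times: "app (a * b) = app a \<circ> app b" by transfer simp

lemma two_zero: "(x::'r::real_vector) + x = 0 \<Longrightarrow> x = 0"
proof -
  assume "x + x = 0"
  hence "(2::real) *\<^sub>R x = 0" by (simp add: scaleR_2)
  thus "x = 0" by simp
qed

lemma eqz: "x = y + z \<Longrightarrow> x - y - z = (0::'a::ab_group_add)" by simp

lemma eqz2: "x - y - z = (0::'a::ab_group_add) \<Longrightarrow> x = y + z" by (simp add: algebra_simps)

definition minid :: "'r::{real_algebra,monoid_mult} set \<Rightarrow> 'r \<Rightarrow> bool" where
 "minid R P \<longleftrightarrow> P \<in> R \<and> P*P = P \<and>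
   (\<forall>T\<in>R. \<forall>x\<in>R. T = T*P \<and> x = P*x \<and> T*x = 0 \<longrightarrow> T = 0 \<or> x = 0) \<and>
   (\<forall>T\<in>R. \<forall>n\<in>R. T = P*T \<and> n = n*P \<and> n*T = 0 \<longrightarrow> T = 0 \<or> n = 0)"

locale ralg =
  fixes R :: "'r::{real_algebra,monoid_mult} set"
  assumes oneR: "1 \<in> R" and addR: "x\<in>R \<Longrightarrow> y\<in>R \<Longrightarrow> x+y \<in> R"
    and mulR: "x\<in>R \<Longrightarrow> y\<in>R \<Longrightarrow> x*y \<in> R" and sclR: "x\<in>R \<Longrightarrow> a *\<^sub>R x \<in> R"
begin
lemma negR: "x\<in>R \<Longrightarrow> -x \<in> R" using sclR[of x "-1"] by simp
lemma diffR: "x\<in>R \<Longrightarrow> y\<in>R \<Longrightarrow> x-y \<in> R" using addR[of x "-y"] negR[of y] by simp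
lemma zeroR: "0 \<in> R" using sclR[OF oneR, of 0] by simp
end

locale zpD = ralg +
  fixes D :: "'r::{real_algebra,monoid_mult} \<Rightarrow> 'r"
  assumes DR: "x\<in>R \<Longrightarrow> D x \<in> R"
    and Dadd: "x\<in>R \<Longrightarrow> y\<in>R \<Longrightarrow> D (x+y) = D x + D y"
    and Dscale: "x\<in>R \<Longrightarrow> D (a *\<^sub>R x) = a *\<^sub>R D x"
    and D1: "D 1 = 0"
    and ZD: "A\<in>R \<Longrightarrow> B\<in>R \<Longrightarrow> A*B = 0 \<Longrightarrow> B*A = 0 \<Longrightarrow> D A*B + B*D A + A*D B + D B*A = 0"
begin

lemma Dneg: "x\<in>R \<Longrightarrow> D (-x) = - D x" using Dscale[of x "-1"] by simp
lemma Ddiff: "x\<in>R \<Longrightarrow> y\<in>R \<Longrightarrow> D (x-y) = D x - D y"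
proof -
  assume a: "x\<in>R" "y\<in>R"
  have "D (x + -y) = D x + D (-y)" using Dadd[OF a(1) negR[OF a(2)]] .
  thus ?thesis using Dneg[OF a(2)] by simp
qed
lemma D0: "D 0 = 0" using Dscale[OF zeroR, of 0] by simp
lemma DQ: "P\<in>R \<Longrightarrow> D (1-P) = - D P" using Ddiff[OF oneR] D1 by simp

lemma idem_D:
  assumes PR: "P\<in>R" and idem: "P*P = P"
  shows "D P = D P * P + P * D P"
proof -
  have QR: "1-P \<in> R" using diffR[OF oneR PR] .
  have "P*(1-P) = 0" "(1-P)*P = 0" using idem by (simp_all add: algebra_simps)
  from ZD[OF PR QR this] DQ[OF PR]
  have "D P*(1-P) + (1-P)*D P + P*(-D P) + (-D P)*P = 0" by simp
  hence "(D P - (D P * P + P * D P)) + (D P - (D P * P + P * D P)) = 0"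
    by (simp add: algebra_simps)
  hence "D P - (D P * P + P * D P) = 0" by (rule two_zero)
  thus ?thesis by simp
qed


lemma Fd_gen: assumes "X\<in>R" "X*X = X" shows "D X - D X * X - X * D X = 0"
proof -
  have "D X - D X * X - X * D X = (D X * X + X * D X) - D X * X - X * D X"
    using idem_D[OF assms] by (rule arg_cong[where f="\<lambda>z. z - D X * X - X * D X"])
  thus ?thesis by simp
qed

context
  fixes P assumes PR: "P\<in>R" and idem: "P*P = P"
begin

lemma PP: "P*(P*x) = P*x" using idem by (simp add: mult.assoc[symmetric])

lemma Fd0: "D P - D P * P - P * D P = 0"
proof -
  have "D P - D P * P - P * D P = (D P * P + P * D P) - D P * P - P * D P"
    using idem_D[OF PR idem] by (rule arg_cong[where f="\<lambda>z. z - D P * P - P * D P"])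
  thus ?thesis by simp
qed

lemma corner_a:
  assumes aR: "a\<in>R" and Pa: "P*a = a" and aP: "a*P = a"
  shows "D a = D a * P + a * D P"
proof -
  have Pax: "P*(a*x) = a*x" for x using Pa by (simp add: mult.assoc[symmetric])
  have aPx: "a*(P*x) = a*x" for x using aP by (simp add: mult.assoc[symmetric])
  have QR: "1-P \<in> R" using diffR[OF oneR PR] .
  have "a*(1-P) = 0" "(1-P)*a = 0" using Pa aP by (simp_all add: algebra_simps)
  from ZD[OF aR QR this] DQ[OF PR]
  have e: "D a*(1-P) + (1-P)*D a + a*(-D P) + (-D P)*a = 0" by simp
  define e' where "e' = D a*(1-P) + (1-P)*D a + a*(-D P) + (-D P)*a"
  define F where "F = D P - D P * P - P * D P"
  have "(D a - D a * P - a * D P) + (D a - D a * P - a * D P) =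
     P*e'*(1-P) + P*e'*(1-P) + (1-P)*e'*(1-P) + a*(P*F*P) + a*(P*F*P)"
    unfolding e'_def F_def by (simp add: algebra_simps PP Pax aPx Pa aP idem)
  hence "(D a - D a * P - a * D P) + (D a - D a * P - a * D P) = 0"
    using e Fd0 unfolding e'_def F_def by simp
  hence "D a - D a * P - a * D P = 0" by (rule two_zero)
  thus ?thesis by (simp add: algebra_simps)
qed


lemma corner_d:
  assumes dR: "d\<in>R" and Pd: "P*d = 0" and dP: "d*P = 0"
  shows "D d * P + d * D P = 0"
proof -
  have Pdx: "P*(d*x) = 0" for x using Pd by (simp add: mult.assoc[symmetric])
  have dPx: "d*(P*x) = 0" for x using dP by (simp add: mult.assoc[symmetric])
  from ZD[OF PR dR Pd dP]
  have e: "D P*d + d*D P + P*D d + D d*P = 0" .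
  define e' where "e' = D P*d + d*D P + P*D d + D d*P"
  define F where "F = D P - D P * P - P * D P"
  have "(D d * P + d * D P) + (D d * P + d * D P) =
     e'*P + e'*P - P*e'*P + d*((1-P)*F*(1-P)) + d*((1-P)*F*(1-P))"
    unfolding e'_def F_def by (simp add: algebra_simps PP Pdx dPx Pd dP idem)
  hence "(D d * P + d * D P) + (D d * P + d * D P) = 0"
    using e Fd0 unfolding e'_def F_def by simp
  thus ?thesis by (rule two_zero)
qed

lemma E3:
  assumes nR: "n\<in>R" and Pn: "P*n + n*P = n" and nn: "n*n = 0"
  shows "D n - (D P*n + D n*P + P*D n + n*D P) = 0" and "D n * n + n * D n = 0"
proof -
  have R1: "P+n \<in> R" "P-n \<in> R" using addR[OF PR nR] diffR[OF PR nR] .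
  have "(P+n)*(P+n) = P*P + (P*n + n*P) + n*n" "(P-n)*(P-n) = P*P - (P*n + n*P) + n*n"
    by (simp_all add: algebra_simps)
  hence i1: "(P+n)*(P+n) = P+n" and i2: "(P-n)*(P-n) = P-n" using Pn nn idem by simp_all
  have F1: "D (P+n) - D (P+n) * (P+n) - (P+n) * D (P+n) = 0" by (rule Fd_gen[OF R1(1) i1])
  have F2: "D (P-n) - D (P-n) * (P-n) - (P-n) * D (P-n) = 0" by (rule Fd_gen[OF R1(2) i2])
  define F where "F = D P - D P * P - P * D P"
  define G where "G = D n - (D P*n + D n*P + P*D n + n*D P)"
  define H where "H = D n * n + n * D n"
  have F1': "(D P + D n) - (D P + D n) * (P+n) - (P+n) * (D P + D n) = 0"
    using F1 Dadd[OF PR nR] by simp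
  have F2': "(D P - D n) - (D P - D n) * (P-n) - (P-n) * (D P - D n) = 0"
    using F2 Ddiff[OF PR nR] by simp
  have "H + H = F + F - ((D P + D n) - (D P + D n) * (P+n) - (P+n) * (D P + D n))
      - ((D P - D n) - (D P - D n) * (P-n) - (P-n) * (D P - D n))"
    unfolding F_def H_def by (simp add: algebra_simps)
  hence "H + H = 0" using F1' F2' Fd0 unfolding F_def by simp
  hence H0: "H = 0" by (rule two_zero)
  have "G = ((D P + D n) - (D P + D n) * (P+n) - (P+n) * (D P + D n)) - F + H"
    unfolding F_def G_def H_def by (simp add: algebra_simps)
  hence "G = 0" using F1' Fd0 H0 unfolding F_def by simp
  thus "D n - (D P*n + D n*P + P*D n + n*D P) = 0" unfolding G_def .
  show "D n * n + n * D n = 0" using H0 unfolding H_def .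
qed

lemma corner_n:
  assumes mP: "minid R P" and nR: "n\<in>R" and Pn: "P*n = n" and nP: "n*P = 0"
  shows "D n * P + n * D P = 0"
proof (cases "n = 0")
  case True thus ?thesis using D0 by simp
next
  case False
  have Pnx: "P*(n*x) = n*x" for x using Pn by (simp add: mult.assoc[symmetric])
  have nPx: "n*(P*x) = 0" for x using nP by (simp add: mult.assoc[symmetric])
  have nn: "n*n = 0" using Pn nP by (metis mult.assoc mult_zero_left)
  have G: "D n - (D P*n + D n*P + P*D n + n*D P) = 0" and H: "D n * n + n * D n = 0"
    using E3[OF nR _ nn] Pn nP by simp_all
  define T where "T = (1-P)*D n*P"
  have TR: "T\<in>R" unfolding T_def using mulR[OF mulR[OF diffR[OF oneR PR] DR[OF nR]] PR] .
  have "T*n = (1-P)*(D n * n + n * D n)"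
    unfolding T_def by (simp add: algebra_simps Pnx nPx Pn nP nn)
  hence Tn: "T*n = 0" using H by simp
  have TP: "T = T*P" unfolding T_def by (simp add: mult.assoc idem)
  from mP have "\<forall>T\<in>R. \<forall>x\<in>R. T = T*P \<and> x = P*x \<and> T*x = 0 \<longrightarrow> T = 0 \<or> x = 0"
    unfolding minid_def by blast
  hence T0: "T = 0" using TR nR TP Pn[symmetric] Tn False by blast
  define F where "F = D P - D P * P - P * D P"
  define G' where "G' = D n - (D P*n + D n*P + P*D n + n*D P)"
  have "D n * P + n * D P = - (G'*P) + T + n*((1-P)*F*(1-P))"
    unfolding T_def F_def G'_def by (simp add: algebra_simps PP Pnx nPx Pn nP idem)
  thus ?thesis using G T0 Fd0 unfolding G'_def F_def by simp
qed

lemma corner_b: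
  assumes mP: "minid R P" and bR: "b\<in>R" and Pb: "P*b = 0" and bP: "b*P = b"
  shows "D b = D b * P + b * D P"
proof (cases "b = 0")
  case True thus ?thesis using D0 by simp
next
  case False
  have Pbx: "P*(b*x) = 0" for x using Pb by (simp add: mult.assoc[symmetric])
  have bPx: "b*(P*x) = b*x" for x using bP by (simp add: mult.assoc[symmetric])
  have bb: "b*b = 0" using Pb bP by (metis mult.assoc mult_zero_right)
  have G: "D b - (D P*b + D b*P + P*D b + b*D P) = 0" and H: "D b * b + b * D b = 0"
    using E3[OF bR _ bb] Pb bP by simp_all
  define T where "T = P*D b*(1-P)"
  have TR: "T\<in>R" unfolding T_def using mulR[OF mulR[OF PR DR[OF bR]] diffR[OF oneR PR]] .
  have "b*T = (D b * b + b * D b)*(1-P)"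
    unfolding T_def by (simp add: algebra_simps Pbx bPx Pb bP bb)
  hence bT: "b*T = 0" using H by simp
  have TP: "T = P*T" unfolding T_def by (simp add: mult.assoc[symmetric] idem)
  from mP have "\<forall>T\<in>R. \<forall>n\<in>R. T = P*T \<and> n = n*P \<and> n*T = 0 \<longrightarrow> T = 0 \<or> n = 0"
    unfolding minid_def by blast
  hence T0: "T = 0" using TR bR TP bP[symmetric] bT False by blast
  define F where "F = D P - D P * P - P * D P"
  define G' where "G' = D b - (D P*b + D b*P + P*D b + b*D P)"
  have "D b - D b * P - b * D P = G'*(1-P) + T + b*(P*F*P)"
    unfolding T_def F_def G'_def by (simp add: algebra_simps PP Pbx bPx Pb bP idem)
  hence "D b - D b * P - b * D P = 0" using G T0 Fd0 unfolding G'_def F_def by simp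
  thus ?thesis by (simp add: algebra_simps)
qed


lemma right_leib:
  assumes mP: "minid R P" and XR: "X\<in>R"
  shows "D (X*P) = D X * P + X * D P"
proof -
  have QR: "1-P \<in> R" using diffR[OF oneR PR] .
  define a where "a = P*X*P"
  define b where "b = (1-P)*X*P"
  define n where "n = P*X*(1-P)"
  define d where "d = (1-P)*X*(1-P)"
  have aR: "a\<in>R" unfolding a_def using mulR[OF mulR[OF PR XR] PR] .
  have bR: "b\<in>R" unfolding b_def using mulR[OF mulR[OF QR XR] PR] .
  have nR: "n\<in>R" unfolding n_def using mulR[OF mulR[OF PR XR] QR] .
  have dR: "d\<in>R" unfolding d_def using mulR[OF mulR[OF QR XR] QR] .
  have X: "X = a + b + n + d" unfolding a_def b_def n_def d_def by (simp add: algebra_simps)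
  have XP: "X*P = a + b" unfolding a_def b_def by (simp add: algebra_simps PP idem)
  have ca: "D a = D a * P + a * D P"
    by (rule corner_a[OF aR]) (simp_all add: a_def mult.assoc PP idem)
  have cb: "D b = D b * P + b * D P"
    by (rule corner_b[OF mP bR]) (simp_all add: b_def algebra_simps PP idem)
  have cn: "D n * P + n * D P = 0"
    by (rule corner_n[OF mP nR]) (simp_all add: n_def algebra_simps PP idem)
  have cd: "D d * P + d * D P = 0"
    by (rule corner_d[OF dR]) (simp_all add: d_def algebra_simps PP idem)
  have DX: "D X = D a + D b + D n + D d"
    using X Dadd addR aR bR nR dR by metis
  have XDP: "X * D P = a*D P + b*D P + n*D P + d*D P" by (subst X) (simp add: algebra_simps)
  have DXP: "D (X*P) = D a + D b" using XP Dadd aR bR by metis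
  have "D (X*P) - (D X * P + X * D P) = (D a - D a * P - a * D P) + (D b - D b * P - b * D P)
     - (D n * P + n * D P) - (D d * P + d * D P)"
    unfolding DXP DX XDP by (simp add: algebra_simps)
  also have "\<dots> = 0" using eqz[OF ca] eqz[OF cb] cn cd by simp
  finally show ?thesis by simp
qed

end
end

locale zp = ralg +
  fixes j :: "'r::{real_algebra,monoid_mult}" and \<phi> :: "'r \<Rightarrow> 'r" and E :: "'r set"
  assumes jR: "j \<in> R" and jc: "x\<in>R \<Longrightarrow> j*x = x*j"
    and phiR: "x\<in>R \<Longrightarrow> \<phi> x \<in> R"
    and phiadd: "x\<in>R \<Longrightarrow> y\<in>R \<Longrightarrow> \<phi> (x+y) = \<phi> x + \<phi> y"
    and phiscale: "x\<in>R \<Longrightarrow> \<phi> (a *\<^sub>R x) = a *\<^sub>R \<phi> x"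
    and phij: "x\<in>R \<Longrightarrow> \<phi> (j*x) = j * \<phi> x"
    and Z: "A\<in>R \<Longrightarrow> B\<in>R \<Longrightarrow> A*B = 0 \<Longrightarrow> B*A = 0 \<Longrightarrow> \<phi> A*B + B*\<phi> A + A*\<phi> B + \<phi> B*A = 0"
    and ER: "E \<subseteq> R"
    and h1: "T\<in>R \<Longrightarrow> e\<in>E \<Longrightarrow> T*e \<in> E"
    and h2: "W\<in>R \<Longrightarrow> (\<forall>e\<in>E. W*e = 0) \<Longrightarrow> W = 0"
    and h3: "e\<in>E \<Longrightarrow> \<exists>P1 P2 a b. minid R P1 \<and> minid R P2 \<and> e = P1 - P2 + a *\<^sub>R P2 + b *\<^sub>R (j*P2)"
begin

lemma phineg: "x\<in>R \<Longrightarrow> \<phi> (-x) = - \<phi> x" using phiscale[of x "-1"] by simp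
lemma phidiff: "x\<in>R \<Longrightarrow> y\<in>R \<Longrightarrow> \<phi> (x-y) = \<phi> x - \<phi> y"
proof -
  assume a: "x\<in>R" "y\<in>R"
  have "\<phi> (x + -y) = \<phi> x + \<phi> (-y)" using phiadd[OF a(1) negR[OF a(2)]] .
  thus ?thesis using phineg[OF a(2)] by simp
qed

definition "c = \<phi> 1"
lemma cR: "c \<in> R" unfolding c_def using phiR[OF oneR] .

lemma idem_comm:
  assumes PR: "P\<in>R" and idem: "P*P = P"
  shows "P*c = c*P"
proof -
  have QR: "1-P \<in> R" using diffR[OF oneR PR] .
  have PP: "P*(P*x) = P*x" for x using idem by (simp add: mult.assoc[symmetric])
  have "P*(1-P) = 0" "(1-P)*P = 0" using idem by (simp_all add: algebra_simps)
  from Z[OF PR QR this] phidiff[OF oneR PR]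
  have e: "\<phi> P*(1-P) + (1-P)*\<phi> P + P*(c - \<phi> P) + (c - \<phi> P)*P = 0" unfolding c_def by simp
  define e' where "e' = \<phi> P*(1-P) + (1-P)*\<phi> P + P*(c - \<phi> P) + (c - \<phi> P)*P"
  have "P*c - c*P = P*e'*(1-P) - (1-P)*e'*P"
    unfolding e'_def by (simp add: algebra_simps PP idem)
  moreover have "e' = 0" using e unfolding e'_def .
  ultimately have "P*c - c*P = 0" by simp
  thus ?thesis by simp
qed

lemma minid_comm: assumes m: "minid R P" shows "P*c = c*P"
proof -
  have "P\<in>R" and "P*P = P" using m unfolding minid_def by simp_all
  thus ?thesis by (rule idem_comm)
qed

lemma jcc: "j*c = c*j" using jc[OF cR] .

lemma E_comm:
  assumes "e\<in>E" shows "e*c = c*e"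
proof -
  obtain P1 P2 a b where m1: "minid R P1" and m2: "minid R P2"
    and e: "e = P1 - P2 + a *\<^sub>R P2 + b *\<^sub>R (j*P2)" using h3[OF assms] by blast
  have c1: "P1*c = c*P1" using minid_comm[OF m1] .
  have c2: "P2*c = c*P2" using minid_comm[OF m2] .
  have c2': "j*(c*x) = c*(j*x)" for x using jcc by (simp add: mult.assoc[symmetric])
  show ?thesis unfolding e by (simp add: algebra_simps c1 c2 c2')
qed

lemma c_central:
  assumes TR: "T\<in>R" shows "c*T = T*c"
proof -
  have WR: "c*T - T*c \<in> R" using diffR[OF mulR[OF cR TR] mulR[OF TR cR]] .
  have "\<forall>e\<in>E. (c*T - T*c)*e = 0"
  proof
    fix e assume eE: "e\<in>E"
    have "T*e \<in> E" using h1[OF TR eE] .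
    hence "(T*e)*c = c*(T*e)" using E_comm by blast
    moreover have "e*c = c*e" using E_comm[OF eE] .
    ultimately show "(c*T - T*c)*e = 0"
      by (simp add: algebra_simps)
  qed
  from h2[OF WR this] show ?thesis by simp
qed

definition "DD x = \<phi> x - c*x"

lemma DD_zpD: "zpD R DD"
proof (unfold_locales)
  fix x y assume x: "x\<in>R" and y: "y\<in>R"
  show "DD x \<in> R" unfolding DD_def using diffR[OF phiR[OF x] mulR[OF cR x]] .
  show "DD (x+y) = DD x + DD y" unfolding DD_def using phiadd[OF x y] by (simp add: algebra_simps)
next
  fix x a assume x: "x\<in>R"
  show "DD (a *\<^sub>R x) = a *\<^sub>R DD x" unfolding DD_def using phiscale[OF x] by (simp add: algebra_simps)
next
  show "DD 1 = 0" unfolding DD_def c_def by simp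
next
  fix A B assume A: "A\<in>R" and B: "B\<in>R" and AB: "A*B = 0" and BA: "B*A = 0"
  have z: "\<phi> A*B + B*\<phi> A + A*\<phi> B + \<phi> B*A = 0" using Z[OF A B AB BA] .
  have cA: "c*A = A*c" and cB: "c*B = B*c" using c_central A B by auto
  have "DD A*B + B*DD A + A*DD B + DD B*A = (\<phi> A*B + B*\<phi> A + A*\<phi> B + \<phi> B*A)
      - (c*A*B + B*(c*A) + A*(c*B) + c*B*A)"
    unfolding DD_def by (simp add: algebra_simps)
  moreover have ABx: "A*(B*x) = 0" and BAx: "B*(A*x) = 0" for x
    using AB BA by (simp_all add: mult.assoc[symmetric])
  moreover have "c*A*B + B*(c*A) + A*(c*B) + c*B*A = 0"
    by (simp add: mult.assoc cA cB ABx BAx AB BA)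
  ultimately show "DD A*B + B*DD A + A*DD B + DD B*A = 0" using z by simp
qed

lemmas Dright_leib = zpD.right_leib[OF DD_zpD]
lemmas DDadd = zpD.Dadd[OF DD_zpD]
lemmas DDscale = zpD.Dscale[OF DD_zpD]
lemmas DDR = zpD.DR[OF DD_zpD]

lemma jcx: "c*(j*x) = j*(c*x)" using jcc by (simp add: mult.assoc[symmetric])

lemma DDj: "x\<in>R \<Longrightarrow> DD (j*x) = j * DD x"
  unfolding DD_def using phij[of x] by (simp add: right_diff_distrib jcx)

definition "GG = {g\<in>R. \<forall>X\<in>R. DD (X*g) = DD X*g + X*DD g}"

lemma GG_minid: assumes m: "minid R P" shows "P \<in> GG"
proof -
  have PR: "P\<in>R" and idem: "P*P = P" using m unfolding minid_def by simp_all
  show ?thesis unfolding GG_def using PR Dright_leib[OF PR idem m] by blast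
qed

lemma GG_add: assumes "g\<in>GG" "h\<in>GG" shows "g+h\<in>GG"
proof -
  have g: "g\<in>R" "\<forall>X\<in>R. DD (X*g) = DD X*g + X*DD g" and h: "h\<in>R" "\<forall>X\<in>R. DD (X*h) = DD X*h + X*DD h"
    using assms unfolding GG_def mem_Collect_eq by blast+
  show ?thesis unfolding GG_def
  proof (intro CollectI conjI ballI)
    show "g+h\<in>R" using addR[OF g(1) h(1)] .
    fix X assume X: "X\<in>R"
    have "DD (X*(g+h)) = DD (X*g + X*h)" by (simp add: algebra_simps)
    also have "\<dots> = DD (X*g) + DD (X*h)" using DDadd[OF mulR[OF X g(1)] mulR[OF X h(1)]] .
    also have "\<dots> = DD X*(g+h) + X*DD (g+h)" using g h X DDadd[OF g(1) h(1)] by (simp add: algebra_simps)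
    finally show "DD (X*(g+h)) = DD X*(g+h) + X*DD (g+h)" .
  qed
qed

lemma GG_scale: assumes "g\<in>GG" shows "a *\<^sub>R g\<in>GG"
proof -
  have g: "g\<in>R" "\<forall>X\<in>R. DD (X*g) = DD X*g + X*DD g" using assms unfolding GG_def mem_Collect_eq by blast+
  show ?thesis unfolding GG_def
  proof (intro CollectI conjI ballI)
    show "a *\<^sub>R g\<in>R" using sclR[OF g(1)] .
    fix X assume X: "X\<in>R"
    have "DD (X*(a *\<^sub>R g)) = DD (a *\<^sub>R (X*g))" by simp
    also have "\<dots> = a *\<^sub>R DD (X*g)" using DDscale[OF mulR[OF X g(1)]] .
    also have "\<dots> = DD X*(a *\<^sub>R g) + X*DD (a *\<^sub>R g)" using g X DDscale[OF g(1)] by (simp add: algebra_simps)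
    finally show "DD (X*(a *\<^sub>R g)) = DD X*(a *\<^sub>R g) + X*DD (a *\<^sub>R g)" .
  qed
qed

lemma GG_neg: "g\<in>GG \<Longrightarrow> -g \<in> GG" using GG_scale[of g "-1"] by simp
lemma GG_diff: "g\<in>GG \<Longrightarrow> h\<in>GG \<Longrightarrow> g-h \<in> GG" using GG_add[OF _ GG_neg, of g h] by simp

lemma GG_j: assumes "g\<in>GG" shows "j*g\<in>GG"
proof -
  have g: "g\<in>R" "\<forall>X\<in>R. DD (X*g) = DD X*g + X*DD g" using assms unfolding GG_def mem_Collect_eq by blast+
  show ?thesis unfolding GG_def
  proof (intro CollectI conjI ballI)
    show "j*g\<in>R" using mulR[OF jR g(1)] .
    fix X assume X: "X\<in>R"
    have XgR: "X*g\<in>R" using mulR[OF X g(1)] .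
    have jX: "X*(j*g) = j*(X*g)" using jc[OF X] by (simp add: mult.assoc[symmetric])
    have jDX: "DD X*(j*g) = j*(DD X*g)" using jc[OF DDR[OF X]] by (simp add: mult.assoc[symmetric])
    have jXg: "X*(j*DD g) = j*(X*DD g)" using jc[OF X] by (simp add: mult.assoc[symmetric])
    have "DD (X*(j*g)) = j*DD (X*g)" unfolding jX using DDj[OF XgR] .
    also have "\<dots> = DD X*(j*g) + X*DD (j*g)" using g X DDj[OF g(1)] jDX jXg by (simp add: algebra_simps)
    finally show "DD (X*(j*g)) = DD X*(j*g) + X*DD (j*g)" .
  qed
qed

lemma E_GG: "e\<in>E \<Longrightarrow> e\<in>GG"
proof -
  assume "e\<in>E"
  then obtain P1 P2 a b where m1: "minid R P1" and m2: "minid R P2"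
    and e: "e = P1 - P2 + a *\<^sub>R P2 + b *\<^sub>R (j*P2)" using h3 by blast
  show ?thesis unfolding e
    by (intro GG_add GG_diff GG_scale GG_j GG_minid m1 m2)
qed

lemma GGD: "g\<in>GG \<Longrightarrow> X\<in>R \<Longrightarrow> DD (X*g) = DD X*g + X*DD g"
  unfolding GG_def by blast

lemma DD_leib:
  assumes S: "S\<in>R" and T: "T\<in>R"
  shows "DD (S*T) = DD S * T + S * DD T"
proof -
  have WR: "DD (S*T) - DD S * T - S * DD T \<in> R"
    using diffR[OF diffR[OF DDR[OF mulR[OF S T]] mulR[OF DDR[OF S] T]] mulR[OF S DDR[OF T]]] .
  have "\<forall>e\<in>E. (DD (S*T) - DD S * T - S * DD T)*e = 0"
  proof
    fix e assume eE: "e\<in>E"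
    have eG: "e\<in>GG" using E_GG[OF eE] .
    have TeG: "T*e\<in>GG" using E_GG[OF h1[OF T eE]] .
    have STR: "S*T\<in>R" using mulR[OF S T] .
    have 1: "DD ((S*T)*e) = DD (S*T)*e + (S*T)*DD e" using GGD[OF eG STR] .
    have 2: "DD (S*(T*e)) = DD S*(T*e) + S*DD (T*e)" using GGD[OF TeG S] .
    have 3: "DD (T*e) = DD T*e + T*DD e" using GGD[OF eG T] .
    have "DD (S*T)*e + (S*T)*DD e = DD S*(T*e) + S*(DD T*e + T*DD e)"
      using 1 2 3 mult.assoc[of S T e] by metis
    moreover have "(DD (S*T) - DD S * T - S * DD T)*e = (DD (S*T)*e + (S*T)*DD e) - (DD S*(T*e) + S*(DD T*e + T*DD e))"
      by (simp add: algebra_simps)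
    ultimately show "(DD (S*T) - DD S * T - S * DD T)*e = 0" by simp
  qed
  from h2[OF WR this] show ?thesis by (rule eqz2)
qed

end

definition goodg :: "('a::real_normed_vector \<times> real) set \<Rightarrow> bool" where
  "goodg G \<longleftrightarrow> (0,0) \<in> G \<and> (\<forall>x a y b. (x,a)\<in>G \<longrightarrow> (y,b)\<in>G \<longrightarrow> (x+y, a+b)\<in>G) \<and>
     (\<forall>c x a. (x,a)\<in>G \<longrightarrow> (c *\<^sub>R x, c*a)\<in>G) \<and>
     (\<forall>x a b. (x,a)\<in>G \<longrightarrow> (x,b)\<in>G \<longrightarrow> a = b) \<and> (\<forall>x a. (x,a)\<in>G \<longrightarrow> a \<le> norm x)"

lemma goodgD:
  assumes "goodg G"
  shows "(0,0) \<in> G" "\<And>x a y b. (x,a)\<in>G \<Longrightarrow> (y,b)\<in>G \<Longrightarrow> (x+y, a+b)\<in>G"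
    "\<And>c x a. (x,a)\<in>G \<Longrightarrow> (c *\<^sub>R x, c*a)\<in>G"
    "\<And>x a b. (x,a)\<in>G \<Longrightarrow> (x,b)\<in>G \<Longrightarrow> a = b" "\<And>x a. (x,a)\<in>G \<Longrightarrow> a \<le> norm x"
  using assms unfolding goodg_def by blast+

lemma goodg_ext:
  fixes M :: "('a::real_normed_vector \<times> real) set"
  assumes g: "goodg M" and y: "\<forall>a. (y,a) \<notin> M"
  shows "\<exists>M'. goodg M' \<and> M \<subseteq> M' \<and> M' \<noteq> M"
proof -
  note gd = goodgD[OF g]
  define S where "S = {a - norm (x - y) | x a. (x,a)\<in>M}"
  have Sne: "S \<noteq> {}" unfolding S_def using gd(1) by blast
  have key: "a - norm (x - y) \<le> norm (z + y) - b" if "(x,a)\<in>M" "(z,b)\<in>M" for x a z b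
  proof -
    have "a + b \<le> norm (x + z)" using gd(5)[OF gd(2)[OF that]] .
    also have "x + z = (x - y) + (z + y)" by simp
    also have "norm \<dots> \<le> norm (x - y) + norm (z + y)" by (rule norm_triangle_ineq)
    finally show ?thesis by simp
  qed
  have Sbd: "bdd_above S" unfolding S_def bdd_above_def
    using key[OF _ gd(1)] by auto
  define c where "c = Sup S"
  have c1: "a - norm (x - y) \<le> c" if "(x,a)\<in>M" for x a
    unfolding c_def by (rule cSup_upper[OF _ Sbd]) (use that S_def in blast)
  have c2: "c \<le> norm (z + y) - b" if "(z,b)\<in>M" for z b
    unfolding c_def by (rule cSup_least[OF Sne]) (use key[OF _ that] S_def in blast)
  define M' where "M' = {(x + t *\<^sub>R y, a + t * c) | x a t. (x,a)\<in>M}"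
  have M'I: "(x,a)\<in>M \<Longrightarrow> (x + t *\<^sub>R y, a + t * c) \<in> M'" for x a t unfolding M'_def by blast
  have sub: "M \<subseteq> M'"
  proof
    fix p assume "p\<in>M"
    then obtain x a where "p = (x,a)" "(x,a)\<in>M" by (cases p) auto
    thus "p\<in>M'" using M'I[of x a 0] by simp
  qed
  have gM': "goodg M'"
    unfolding goodg_def
  proof (intro conjI allI impI)
    show "(0,0) \<in> M'" using M'I[OF gd(1), of 0] by simp
  next
    fix x a z b assume "(x,a)\<in>M'" "(z,b)\<in>M'"
    then obtain x1 a1 t1 x2 a2 t2 where 1: "x = x1 + t1 *\<^sub>R y" "a = a1 + t1*c" "(x1,a1)\<in>M"
      and 2: "z = x2 + t2 *\<^sub>R y" "b = a2 + t2*c" "(x2,a2)\<in>M" unfolding M'_def by blast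
    have "(x1+x2 + (t1+t2) *\<^sub>R y, (a1+a2) + (t1+t2)*c) \<in> M'" using M'I[OF gd(2)[OF 1(3) 2(3)]] .
    thus "(x+z, a+b) \<in> M'" using 1 2 by (simp add: algebra_simps scaleR_add_left)
  next
    fix k x a assume "(x,a)\<in>M'"
    then obtain x1 a1 t1 where 1: "x = x1 + t1 *\<^sub>R y" "a = a1 + t1*c" "(x1,a1)\<in>M"
      unfolding M'_def by blast
    have "(k *\<^sub>R x1 + (k*t1) *\<^sub>R y, k*a1 + (k*t1)*c) \<in> M'" using M'I[OF gd(3)[OF 1(3)]] .
    thus "(k *\<^sub>R x, k*a) \<in> M'" using 1 by (simp add: algebra_simps)
  next
    fix x a b assume "(x,a)\<in>M'" "(x,b)\<in>M'"
    then obtain x1 a1 t1 x2 a2 t2 where 1: "x = x1 + t1 *\<^sub>R y" "a = a1 + t1*c" "(x1,a1)\<in>M"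
      and 2: "x = x2 + t2 *\<^sub>R y" "b = a2 + t2*c" "(x2,a2)\<in>M" unfolding M'_def by blast
    have d: "(x1 - x2, a1 - a2) \<in> M"
      using gd(2)[OF 1(3) gd(3)[OF 2(3), of "-1"]] by simp
    have tt: "t1 = t2"
    proof (rule ccontr)
      assume ne: "t1 \<noteq> t2"
      have "(x1 - x2) = (t2 - t1) *\<^sub>R y" using 1(1) 2(1) by (simp add: algebra_simps)
      hence yeq: "y = (1/(t2 - t1)) *\<^sub>R (x1 - x2)" using ne by simp
      have m: "((1/(t2 - t1)) *\<^sub>R (x1 - x2), (1/(t2-t1)) * (a1 - a2)) \<in> M" by (rule gd(3)[OF d])
      show False using m y unfolding yeq[symmetric] by blast
    qed
    hence "x1 = x2" using 1(1) 2(1) by simp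
    hence "a1 = a2" using gd(4) 1(3) 2(3) by blast
    thus "a = b" using 1 2 tt by simp
  next
    fix x a assume "(x,a)\<in>M'"
    then obtain x1 a1 t where 1: "x = x1 + t *\<^sub>R y" "a = a1 + t*c" "(x1,a1)\<in>M"
      unfolding M'_def by blast
    show "a \<le> norm x"
    proof (cases "t = 0")
      case True thus ?thesis using 1 gd(5) by simp
    next
      case False
      show ?thesis
      proof (cases "t > 0")
        case True
        have m: "((1/t) *\<^sub>R x1, (1/t)*a1) \<in> M" using gd(3)[OF 1(3)] .
        have "c \<le> norm ((1/t) *\<^sub>R x1 + y) - (1/t)*a1" using c2[OF m] .
        also have "(1/t) *\<^sub>R x1 + y = (1/t) *\<^sub>R (x1 + t *\<^sub>R y)" using True by (simp add: algebra_simps)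
        also have "norm \<dots> = (1/t) * norm (x1 + t *\<^sub>R y)" using True by simp
        finally have "t * c \<le> t * ((1/t) * norm (x1 + t *\<^sub>R y) - (1/t)*a1)"
          using True by (simp add: mult_left_mono)
        also have "\<dots> = norm (x1 + t *\<^sub>R y) - a1" using True by (simp add: algebra_simps)
        finally show ?thesis using 1 by simp
      next
        case False
        hence tn: "t < 0" using \<open>t \<noteq> 0\<close> by simp
        define s where "s = -t"
        have sp: "s > 0" using tn s_def by simp
        have m: "((1/s) *\<^sub>R x1, (1/s)*a1) \<in> M" using gd(3)[OF 1(3)] .
        have "(1/s)*a1 - norm ((1/s) *\<^sub>R x1 - y) \<le> c" using c1[OF m] .
        also have "(1/s) *\<^sub>R x1 - y = (1/s) *\<^sub>R (x1 + t *\<^sub>R y)" using sp s_def by (simp add: algebra_simps)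
        also have "norm \<dots> = (1/s) * norm (x1 + t *\<^sub>R y)" using sp by simp
        finally have "s * ((1/s)*a1 - (1/s) * norm (x1 + t *\<^sub>R y)) \<le> s * c"
          using sp by (simp add: mult_left_mono)
        hence "a1 - norm (x1 + t *\<^sub>R y) \<le> s * c" using sp by (simp add: algebra_simps)
        thus ?thesis using 1 s_def by simp
      qed
    qed
  qed
  have "(y, c) \<in> M'" using M'I[OF gd(1), of 1] by simp
  hence "M' \<noteq> M" using y by blast
  thus ?thesis using gM' sub by blast
qed

lemma hahn_banach_norm:
  fixes x0 :: "'a::real_normed_vector"
  shows "\<exists>f. bounded_linear f \<and> (\<forall>x. \<bar>f x\<bar> \<le> norm x) \<and> f x0 = norm x0"
proof -
  define G0 where "G0 = {(t *\<^sub>R x0, t * norm x0) | t. True}"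
  have gG0: "goodg G0" unfolding goodg_def G0_def
  proof (intro conjI allI impI)
    show "(0,0) \<in> {(t *\<^sub>R x0, t * norm x0) | t. True}" by (rule CollectI, rule exI[of _ 0]) simp
  next
    fix x a y b assume "(x,a) \<in> {(t *\<^sub>R x0, t * norm x0) | t. True}" "(y,b) \<in> {(t *\<^sub>R x0, t * norm x0) | t. True}"
    then obtain t s where "x = t *\<^sub>R x0" "a = t * norm x0" "y = s *\<^sub>R x0" "b = s * norm x0" by blast
    thus "(x+y,a+b) \<in> {(t *\<^sub>R x0, t * norm x0) | t. True}"
      by (intro CollectI exI[of _ "t+s"]) (simp add: algebra_simps scaleR_add_left)
  next
    fix k x a assume "(x,a) \<in> {(t *\<^sub>R x0, t * norm x0) | t. True}"
    then obtain t where "x = t *\<^sub>R x0" "a = t * norm x0" by blast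
    thus "(k *\<^sub>R x, k*a) \<in> {(t *\<^sub>R x0, t * norm x0) | t. True}"
      by (intro CollectI exI[of _ "k*t"]) simp
  next
    fix x a b assume "(x,a) \<in> {(t *\<^sub>R x0, t * norm x0) | t. True}" "(x,b) \<in> {(t *\<^sub>R x0, t * norm x0) | t. True}"
    then obtain t s where 1: "x = t *\<^sub>R x0" "a = t * norm x0" "x = s *\<^sub>R x0" "b = s * norm x0" by blast
    show "a = b"
    proof (cases "x0 = 0")
      case True thus ?thesis using 1 by simp
    next
      case False
      have "t *\<^sub>R x0 = s *\<^sub>R x0" using 1(1) 1(3) by (rule trans[OF sym])
      hence "t = s" using False by auto
      thus ?thesis using 1 by simp
    qed
  next
    fix x a assume "(x,a) \<in> {(t *\<^sub>R x0, t * norm x0) | t. True}"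
    then obtain t where "x = t *\<^sub>R x0" "a = t * norm x0" by blast
    thus "a \<le> norm x" by (simp add: mult_right_mono)
  qed
  define A where "A = {G. goodg G \<and> G0 \<subseteq> G}"
  have "\<forall>C\<in>chains A. \<exists>U\<in>A. \<forall>X\<in>C. X \<subseteq> U"
  proof
    fix C assume C: "C \<in> chains A"
    show "\<exists>U\<in>A. \<forall>X\<in>C. X \<subseteq> U"
    proof (cases "C = {}")
      case True thus ?thesis using gG0 unfolding A_def by blast
    next
      case False
      have CA: "C \<subseteq> A" using chainsD2[OF C] .
      have gC: "goodg G" if "G\<in>C" for G using CA that unfolding A_def by blast
      have two: "\<exists>G\<in>C. p\<in>G \<and> q\<in>G" if pq: "p\<in>\<Union>C" "q\<in>\<Union>C" for p q
      proof -
        obtain G1 G2 where "G1\<in>C" "G2\<in>C" "p\<in>G1" "q\<in>G2" using pq by blast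
        thus ?thesis using chainsD[OF C] by blast
      qed
      have gU: "goodg (\<Union>C)" unfolding goodg_def
      proof (intro conjI allI impI)
        obtain G where "G\<in>C" using False by blast
        thus "(0,0) \<in> \<Union>C" using goodgD(1)[OF gC] by blast
      next
        fix x a y b assume "(x,a)\<in>\<Union>C" "(y,b)\<in>\<Union>C"
        then obtain G where "G\<in>C" "(x,a)\<in>G" "(y,b)\<in>G" using two by blast
        thus "(x+y,a+b)\<in>\<Union>C" using goodgD(2)[OF gC] by blast
      next
        fix k x a assume "(x,a)\<in>\<Union>C"
        then obtain G where "G\<in>C" "(x,a)\<in>G" by blast
        thus "(k *\<^sub>R x, k*a)\<in>\<Union>C" using goodgD(3)[OF gC] by blast
      next
        fix x a b assume "(x,a)\<in>\<Union>C" "(x,b)\<in>\<Union>C"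
        then obtain G where "G\<in>C" "(x,a)\<in>G" "(x,b)\<in>G" using two by blast
        thus "a = b" using goodgD(4)[OF gC] by blast
      next
        fix x a assume "(x,a)\<in>\<Union>C"
        then obtain G where "G\<in>C" "(x,a)\<in>G" by blast
        thus "a \<le> norm x" using goodgD(5)[OF gC] by blast
      qed
      have "G0 \<subseteq> \<Union>C" using False CA unfolding A_def by blast
      hence "\<Union>C \<in> A" using gU unfolding A_def by blast
      thus ?thesis by blast
    qed
  qed
  from Zorn_Lemma2[OF this] obtain M where MA: "M\<in>A" and max: "\<forall>X\<in>A. M \<subseteq> X \<longrightarrow> X = M" by blast
  have gM: "goodg M" and G0M: "G0 \<subseteq> M" using MA unfolding A_def by auto
  note gd = goodgD[OF gM]
  have tot: "\<exists>a. (y,a)\<in>M" for y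
  proof (rule ccontr)
    assume "\<nexists>a. (y,a)\<in>M"
    then obtain M' where "goodg M'" "M \<subseteq> M'" "M' \<noteq> M" using goodg_ext[OF gM] by blast
    moreover have "M'\<in>A" using \<open>goodg M'\<close> \<open>M \<subseteq> M'\<close> G0M unfolding A_def by blast
    ultimately show False using max by blast
  qed
  define f where "f y = (THE a. (y,a)\<in>M)" for y
  have fM: "(y, f y)\<in>M" for y
  proof -
    obtain a where a: "(y,a)\<in>M" using tot by blast
    have "(THE a. (y,a)\<in>M) = a" by (rule the_equality) (use a gd(4)[OF a] in blast)+
    thus ?thesis unfolding f_def using a by simp
  qed
  have fadd: "f (x+y) = f x + f y" for x y using gd(4)[OF fM gd(2)[OF fM fM]] .
  have fscale: "f (k *\<^sub>R x) = k * f x" for k x using gd(4)[OF fM gd(3)[OF fM]] .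
  have lin: "linear f" by (rule linearI) (simp_all add: fadd fscale)
  have fle: "f x \<le> norm x" for x using gd(5)[OF fM] .
  have fabs: "\<bar>f x\<bar> \<le> norm x" for x
    using fle[of x] fle[of "-x"] fscale[of "-1" x] by simp
  have "bounded_linear f"
    by (rule bounded_linear_intro[where K=1]) (simp_all add: fadd fscale fabs)
  moreover have "f x0 = norm x0"
  proof -
    have "(x0, norm x0) \<in> M" using G0M unfolding G0_def by (force intro: exI[of _ 1])
    thus ?thesis using gd(4)[OF fM] by blast
  qed
  ultimately show ?thesis using fabs by blast
qed

locale econ =
  fixes J0 :: "'a::real_normed_vector \<Rightarrow> 'a" and f1 :: "'a \<Rightarrow> real" and w :: 'a
  assumes J0lin: "linear J0" and jz: "J0 = (\<lambda>x. 0) \<or> (\<forall>x. J0 (J0 x) = -x)"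
    and f1lin: "linear f1" and fw: "f1 w = 1" and fJw: "f1 (J0 w) = 0"
begin

definition Ex :: "'a \<Rightarrow> 'a \<Rightarrow> 'a" where "Ex x = (\<lambda>y. f1 y *\<^sub>R x - f1 (J0 y) *\<^sub>R J0 x)"

lemma f1_add: "f1 (x+y) = f1 x + f1 y" using f1lin by (rule linear_add)
lemma f1_scale: "f1 (c *\<^sub>R x) = c * f1 x" using linear_scale[OF f1lin] by simp
lemma f1_diff: "f1 (x-y) = f1 x - f1 y" using f1lin by (rule linear_diff)
lemma f1_0: "f1 0 = 0" using f1lin by (rule linear_0)
lemma J_add: "J0 (x+y) = J0 x + J0 y" using J0lin by (rule linear_add)
lemma J_scale: "J0 (c *\<^sub>R x) = c *\<^sub>R J0 x" using J0lin by (rule linear_scale)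
lemma J_diff: "J0 (x-y) = J0 x - J0 y" using J0lin by (rule linear_diff)
lemma J_0: "J0 0 = 0" using J0lin by (rule linear_0)
lemma J_neg: "J0 (-x) = - J0 x" using J0lin by (rule linear_neg)

lemmas lsimps = f1_add f1_scale f1_diff f1_0 J_add J_scale J_diff J_0 J_neg

lemma Ex_w: "Ex x w = x" by (simp add: Ex_def fw fJw)

lemma Ex_lin: "linear (Ex x)"
  unfolding linear_iff Ex_def by (simp add: lsimps algebra_simps scaleR_add_left)

lemma Ex_add: "Ex (x1 + x2) = (\<lambda>y. Ex x1 y + Ex x2 y)"
  unfolding Ex_def by (rule ext) (simp add: lsimps algebra_simps)

lemma Ex_scale: "Ex (c *\<^sub>R x) = (\<lambda>y. c *\<^sub>R Ex x y)"
  unfolding Ex_def by (rule ext) (simp add: lsimps algebra_simps)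

lemma Ex_comp:
  assumes "linear T" "\<And>z. T (J0 z) = J0 (T z)"
  shows "T \<circ> Ex x = Ex (T x)"
  unfolding Ex_def by (rule ext) (simp add: assms linear_diff[OF assms(1)] linear_scale[OF assms(1)])

lemma Ex_idem:
  assumes u1: "f1 u = 1" and u0: "f1 (J0 u) = 0"
  shows "Ex u \<circ> Ex u = Ex u"
proof (rule ext)
  fix y
  have "(Ex u \<circ> Ex u) y = f1 y *\<^sub>R u - (- f1 (J0 y) * f1 (J0 (J0 u))) *\<^sub>R J0 u"
    unfolding Ex_def by (simp add: lsimps u1 u0 algebra_simps)
  also have "\<dots> = Ex u y"
    using jz
  proof
    assume "J0 = (\<lambda>x. 0)" thus ?thesis unfolding Ex_def by simp
  next
    assume "\<forall>x. J0 (J0 x) = -x" thus ?thesis unfolding Ex_def by (simp add: lsimps u1 f1lin linear_neg)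
  qed
  finally show "(Ex u \<circ> Ex u) y = Ex u y" .
qed

lemma Sg:
  assumes e: "a *\<^sub>R p + b *\<^sub>R J0 p = 0" and p: "p \<noteq> 0"
  shows "a = 0 \<and> b *\<^sub>R J0 q = 0"
  using jz
proof
  assume J: "J0 = (\<lambda>x. 0)"
  thus ?thesis using e p by simp
next
  assume J: "\<forall>x. J0 (J0 x) = -x"
  have e2: "a *\<^sub>R J0 p - b *\<^sub>R p = 0" using arg_cong[OF e, of J0] J by (simp add: lsimps)
  have "(a*a + b*b) *\<^sub>R p = a *\<^sub>R (a *\<^sub>R p + b *\<^sub>R J0 p) - b *\<^sub>R (a *\<^sub>R J0 p - b *\<^sub>R p)"
    by (simp add: algebra_simps scaleR_add_left)
  also have "\<dots> = 0" using e e2 by simp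
  finally have "a*a + b*b = 0" using p by simp
  hence "a = 0" "b = 0" by (simp_all add: sum_squares_eq_zero_iff)
  thus ?thesis by simp
qed

lemma L1:
  assumes u1: "f1 u = 1" and u0: "f1 (J0 u) = 0"
    and T: "linear T" "\<And>z. T (J0 z) = J0 (T z)" and X: "linear X"
    and TP: "T = T \<circ> Ex u" and PX: "X = Ex u \<circ> X" and TX: "T \<circ> X = (\<lambda>_. 0)"
  shows "T = (\<lambda>_. 0) \<or> X = (\<lambda>_. 0)"
proof (cases "X = (\<lambda>_. 0)")
  case True thus ?thesis by simp
next
  case False
  then obtain y where y: "X y \<noteq> 0" by auto
  have Xy: "X y = f1 (X y) *\<^sub>R u + (- f1 (J0 (X y))) *\<^sub>R J0 u"
    using fun_cong[OF PX, of y] unfolding Ex_def by simp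
  have "T (X y) = 0" using fun_cong[OF TX, of y] by simp
  hence "f1 (X y) *\<^sub>R T u + (- f1 (J0 (X y))) *\<^sub>R J0 (T u) = 0"
    by (subst (asm) Xy) (simp add: linear_add[OF T(1)] linear_diff[OF T(1)] linear_scale[OF T(1)] T(2))
  have Tu: "T u = 0"
  proof (rule ccontr)
    assume ne: "T u \<noteq> 0"
    from Sg[OF \<open>f1 (X y) *\<^sub>R T u + (- f1 (J0 (X y))) *\<^sub>R J0 (T u) = 0\<close> ne, of u]
    have "f1 (X y) = 0" "(- f1 (J0 (X y))) *\<^sub>R J0 u = 0" by auto
    hence "X y = 0" using Xy by auto
    thus False using y by simp
  qed
  have "T z = 0" for z
  proof -
    have "T z = T (Ex u z)" using fun_cong[OF TP, of z] by simp
    also have "\<dots> = 0" unfolding Ex_def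
      by (simp add: linear_diff[OF T(1)] linear_scale[OF T(1)] T(2) Tu J_0)
    finally show ?thesis .
  qed
  thus ?thesis by auto
qed

lemma L2:
  assumes u1: "f1 u = 1" and u0: "f1 (J0 u) = 0"
    and T: "linear T" and N: "linear N" "\<And>z. N (J0 z) = J0 (N z)"
    and PT: "T = Ex u \<circ> T" and NP: "N = N \<circ> Ex u" and NT: "N \<circ> T = (\<lambda>_. 0)"
  shows "T = (\<lambda>_. 0) \<or> N = (\<lambda>_. 0)"
proof (cases "N = (\<lambda>_. 0)")
  case True thus ?thesis by simp
next
  case False
  then obtain y where y: "N y \<noteq> 0" by auto
  have Nu: "N u \<noteq> 0"
  proof
    assume Nu: "N u = 0"
    have "N y = N (Ex u y)" using fun_cong[OF NP, of y] by simp
    also have "\<dots> = 0" unfolding Ex_def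
      by (simp add: linear_diff[OF N(1)] linear_scale[OF N(1)] N(2) Nu J_0)
    finally show False using y by simp
  qed
  have "T z = 0" for z
  proof -
    have Tz: "T z = f1 (T z) *\<^sub>R u + (- f1 (J0 (T z))) *\<^sub>R J0 u"
      using fun_cong[OF PT, of z] unfolding Ex_def by simp
    have "N (T z) = 0" using fun_cong[OF NT, of z] by simp
    hence e: "f1 (T z) *\<^sub>R N u + (- f1 (J0 (T z))) *\<^sub>R J0 (N u) = 0"
      by (subst (asm) Tz) (simp add: linear_add[OF N(1)] linear_diff[OF N(1)] linear_scale[OF N(1)] N(2))
    from Sg[OF e Nu, of u] have "f1 (T z) = 0" "(- f1 (J0 (T z))) *\<^sub>R J0 u = 0" by auto
    thus ?thesis using Tz by auto
  qed
  thus ?thesis by auto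
qed

end

lemma Lop_app: "linear f \<Longrightarrow> app (Lop f) = f" by (simp add: Lop_inverse)
lemma app_lin: "linear (app t)" using app by simp
lemma Lop_eq: "linear f \<Longrightarrow> linear g \<Longrightarrow> Lop f = Lop g \<longleftrightarrow> f = g" by (simp add: Lop_inject)
lemma Lop_add: "linear f \<Longrightarrow> linear g \<Longrightarrow> Lop f + Lop g = Lop (\<lambda>x. f x + g x)"
  by (rule app_inject[THEN iffD1]) (simp add: plus_lop.rep_eq Lop_app linear_compose_add)
lemma Lop_diff: "linear f \<Longrightarrow> linear g \<Longrightarrow> Lop f - Lop g = Lop (\<lambda>x. f x - g x)"
  by (rule app_inject[THEN iffD1]) (simp add: minus_lop.rep_eq Lop_app linear_compose_sub)
lemma Lop_mult: "linear f \<Longrightarrow> linear g \<Longrightarrow> Lop f * Lop g = Lop (f \<circ> g)"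
  by (rule app_inject[THEN iffD1]) (simp add: times_lop.rep_eq Lop_app linear_compose)
lemma Lop_scale: "linear f \<Longrightarrow> a *\<^sub>R Lop f = Lop (\<lambda>x. a *\<^sub>R f x)"
proof -
  assume f: "linear f"
  have l: "linear (\<lambda>x. a *\<^sub>R f x)" using f unfolding linear_iff by (simp add: linear_add linear_scale scaleR_add_right)
  show ?thesis by (rule app_inject[THEN iffD1]) (simp add: scaleR_lop.rep_eq Lop_app f l)
qed
lemma Lop_one: "1 = Lop id" by (rule app_inject[THEN iffD1]) (simp add: one_lop.rep_eq Lop_app linear_id)
lemma Lop_zero: "0 = Lop (\<lambda>x. 0)" by (rule app_inject[THEN iffD1]) (simp add: zero_lop.rep_eq Lop_app linear_zero)

lemmas lop_simps = plus_lop.rep_eq minus_lop.rep_eq times_lop.rep_eq scaleR_lop.rep_eq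
  one_lop.rep_eq zero_lop.rep_eq uminus_lop.rep_eq

lemma usa_facts:
  assumes "unital_standard_algebra C A"
  shows "A \<subseteq> bops C" "fin_rank C \<subseteq> A" "id \<in> A"
    "\<And>S T. S\<in>A \<Longrightarrow> T\<in>A \<Longrightarrow> (\<lambda>x. S x + T x) \<in> A"
    "\<And>S T. S\<in>A \<Longrightarrow> T\<in>A \<Longrightarrow> S \<circ> T \<in> A"
    "\<And>c T. T\<in>A \<Longrightarrow> (\<lambda>x. c *\<^sub>R T x) \<in> A"
    "\<And>J T. J\<in>C \<Longrightarrow> T\<in>A \<Longrightarrow> J \<circ> T \<in> A"
  using assms unfolding unital_standard_algebra_def by blast+

lemma alg_linear_facts:
  assumes "alg_linear C A f"
  shows "\<And>T. T\<in>A \<Longrightarrow> f T \<in> A"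
    "\<And>S T. S\<in>A \<Longrightarrow> T\<in>A \<Longrightarrow> f (\<lambda>x. S x + T x) = (\<lambda>x. f S x + f T x)"
    "\<And>c T. T\<in>A \<Longrightarrow> f (\<lambda>x. c *\<^sub>R T x) = (\<lambda>x. c *\<^sub>R f T x)"
    "\<And>J T. J\<in>C \<Longrightarrow> T\<in>A \<Longrightarrow> f (J \<circ> T) = J \<circ> f T"
  using assms unfolding alg_linear_def by blast+

lemma app_eqI: "app x = app y \<Longrightarrow> x = y" by (simp add: app_inject)

lemma nontrivial_case:
  fixes C :: "('a::banach \<Rightarrow> 'a) set" and \<A> :: "('a \<Rightarrow> 'a) set"
    and \<phi> :: "('a \<Rightarrow> 'a) \<Rightarrow> ('a \<Rightarrow> 'a)"
  assumes sd: "scalar_data C"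
    and usa: "unital_standard_algebra C \<A>"
    and al: "alg_linear C \<A> \<phi>"
    and zc: "\<forall>A\<in>\<A>. \<forall>B\<in>\<A>. A \<circ> B = (\<lambda>x. 0) \<and> B \<circ> A = (\<lambda>x. 0) \<longrightarrow>
           (\<lambda>x. jordan (\<phi> A) B x + jordan A (\<phi> B) x) = (\<lambda>x. 0)"
    and z0: "z0 \<noteq> (0::'a)"
  shows "(\<forall>T\<in>\<A>. \<phi> id \<circ> T = T \<circ> \<phi> id) \<and>
     (\<forall>S\<in>\<A>. \<forall>T\<in>\<A>. (\<lambda>x. \<phi> (S \<circ> T) x - \<phi> id ((S \<circ> T) x)) =
        (\<lambda>x. (\<phi> S (T x) - \<phi> id (S (T x))) + S (\<phi> T x - \<phi> id (T x))))"
proof -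
  note U = usa_facts[OF usa]
  note AL = alg_linear_facts[OF al]
  have blA: "bounded_linear T" if "T\<in>\<A>" for T using U(1) that unfolding bops_def by blast
  have linA: "linear T" if "T\<in>\<A>" for T using blA[OF that] bounded_linear.linear by blast
  from sd obtain J0 where JC: "(C = {} \<and> J0 = (\<lambda>x. 0)) \<or> (complex_structure J0 \<and> C = {J0})"
    unfolding scalar_data_def by blast
  have J0bl: "bounded_linear J0" using JC unfolding complex_structure_def
    by (auto simp: bounded_linear_zero)
  have J0lin: "linear J0" using J0bl bounded_linear.linear by blast
  have jz: "J0 = (\<lambda>x. 0) \<or> (\<forall>x. J0 (J0 x) = -x)" using JC unfolding complex_structure_def by auto
  have Acomm: "T (J0 z) = J0 (T z)" if T: "T\<in>\<A>" for T z
    using JC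
  proof
    assume "C = {} \<and> J0 = (\<lambda>x. 0)"
    thus ?thesis using linear_0[OF linA[OF T]] by simp
  next
    assume h: "complex_structure J0 \<and> C = {J0}"
    have "T \<circ> J0 = J0 \<circ> T" using U(1) T h unfolding bops_def by blast
    thus ?thesis by (metis comp_apply)
  qed
  obtain f1 where f1bl: "bounded_linear f1" and f1z: "f1 z0 = norm z0"
    using hahn_banach_norm[of z0] by blast
  have f1lin: "linear f1" using f1bl bounded_linear.linear by blast
  define p where "p = norm z0"
  define q where "q = f1 (J0 z0)"
  define w where "w = (p/(p*p+q*q)) *\<^sub>R z0 + (q/(p*p+q*q)) *\<^sub>R J0 z0"
  have f1p: "f1 z0 = p" using f1z unfolding p_def .
  have f1q: "f1 (J0 z0) = q" unfolding q_def ..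
  have pp: "p > 0" using z0 unfolding p_def by simp
  have den: "p*p+q*q > 0" using pp by (simp add: add_pos_nonneg)
  have fw: "f1 w = 1"
  proof -
    have "f1 w = (p/(p*p+q*q)) * p + (q/(p*p+q*q)) * q"
      unfolding w_def by (simp add: linear_add[OF f1lin] linear_scale[OF f1lin] f1p f1q)
    also have "\<dots> = (p*p + q*q)/(p*p+q*q)" by (simp only: times_divide_eq_left add_divide_distrib)
    also have "\<dots> = 1" using den by (intro divide_self) linarith
    finally show ?thesis .
  qed
  have fJw: "f1 (J0 w) = 0"
    using jz
  proof
    assume "J0 = (\<lambda>x. 0)" thus ?thesis using linear_0[OF f1lin] by simp
  next
    assume J: "\<forall>x. J0 (J0 x) = -x"
    have "f1 (J0 w) = (p/(p*p+q*q)) * q + (q/(p*p+q*q)) * (-p)"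
      unfolding w_def using J
      by (simp add: linear_add[OF f1lin] linear_diff[OF f1lin] linear_scale[OF f1lin] linear_neg[OF f1lin]
          linear_add[OF J0lin] linear_scale[OF J0lin] f1p f1q)
    also have "\<dots> = 0" by (simp add: field_simps)
    finally show ?thesis .
  qed
  interpret E: econ J0 f1 w by (rule econ.intro[OF J0lin jz f1lin fw fJw])
  have ExA: "E.Ex x \<in> \<A>" for x
  proof -
    have bl: "bounded_linear (E.Ex x)" unfolding E.Ex_def
      by (intro bounded_linear_sub bounded_linear_compose[OF bounded_linear_scaleR_left f1bl]
          bounded_linear_compose[OF bounded_linear_scaleR_left bounded_linear_compose[OF f1bl J0bl]])
    have cm: "\<forall>J\<in>C. E.Ex x \<circ> J = J \<circ> E.Ex x"
      using JC
    proof
      assume "C = {} \<and> J0 = (\<lambda>x. 0)" thus ?thesis by simp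
    next
      assume h: "complex_structure J0 \<and> C = {J0}"
      hence J: "\<forall>x. J0 (J0 x) = -x" unfolding complex_structure_def by blast
      show ?thesis using h J unfolding E.Ex_def
        by (auto intro!: ext simp: linear_diff[OF J0lin] linear_scale[OF J0lin] linear_neg[OF f1lin] algebra_simps)
    qed
    have rg: "range (E.Ex x) \<subseteq> span {x, J0 x}"
    proof
      fix z assume "z \<in> range (E.Ex x)"
      then obtain y where "z = f1 y *\<^sub>R x - f1 (J0 y) *\<^sub>R J0 x" unfolding E.Ex_def by blast
      thus "z \<in> span {x, J0 x}" by (metis span_diff span_scale span_base insertI1 insertI2 singletonI)
    qed
    have "E.Ex x \<in> fin_rank C" unfolding fin_rank_def bops_def
      using bl cm rg by (intro CollectI conjI exI[of _ "{x, J0 x}"]) auto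
    thus ?thesis using U(2) by blast
  qed
  have Exlin: "linear (E.Ex x)" for x by (rule E.Ex_lin)
  define R where "R = Lop ` \<A>"
  have LR: "Lop f \<in> R" if "f\<in>\<A>" for f using that unfolding R_def by blast
  have RE: "\<exists>f\<in>\<A>. t = Lop f" if "t\<in>R" for t using that unfolding R_def by blast
  have appR: "app t \<in> \<A>" if tR: "t\<in>R" for t
  proof -
    obtain f where f: "f\<in>\<A>" "t = Lop f" using RE[OF tR] by blast
    thus ?thesis using Lop_app[OF linA[OF f(1)]] by simp
  qed
  have LappR: "Lop (app t) = t" for t by (rule app_inverse)
  have ralg: "ralg R"
  proof
    show "1 \<in> R" unfolding Lop_one using LR[OF U(3)] .
  next
    fix x y assume x: "x\<in>R" and y: "y\<in>R"
    have "x + y = Lop (\<lambda>z. app x z + app y z)" by (rule app_eqI) (simp add: lop_simps Lop_app linear_compose_add app_lin)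
    thus "x + y \<in> R" using LR[OF U(4)[OF appR[OF x] appR[OF y]]] by simp
    have "x * y = Lop (app x \<circ> app y)" by (rule app_eqI) (simp add: lop_simps Lop_app linear_compose app_lin)
    thus "x * y \<in> R" using LR[OF U(5)[OF appR[OF x] appR[OF y]]] by simp
  next
    fix x a assume x: "x\<in>R"
    have "a *\<^sub>R x = Lop (\<lambda>z. a *\<^sub>R app x z)" unfolding Lop_scale[OF app_lin, symmetric] LappR ..
    thus "a *\<^sub>R x \<in> R" using LR[OF U(6)[OF appR[OF x]]] by simp
  qed
  have linR: "linear (app t)" for t by (rule app_lin)
  have Lapp: "app (Lop f) = f" if "f\<in>\<A>" for f using Lop_app[OF linA[OF that]] .
  define jj where "jj = (if C = {} then 1 else Lop J0)"
  have J0A: "J0 \<in> \<A>" if "C \<noteq> {}"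
  proof -
    have "J0 \<in> C" using JC that by auto
    from U(7)[OF this U(3)] show ?thesis by simp
  qed
  have jjR: "jj \<in> R" unfolding jj_def using ralg.oneR[OF ralg] LR[OF J0A] by auto
  have jjc: "jj * x = x * jj" if xR: "x\<in>R" for x
  proof (cases "C = {}")
    case True thus ?thesis unfolding jj_def by simp
  next
    case False
    have "app (Lop J0 * x) = app (x * Lop J0)"
      using Acomm[OF appR[OF xR]] by (auto simp: lop_simps Lop_app[OF J0lin])
    thus ?thesis unfolding jj_def using False app_eqI by auto
  qed
  define Phi where "Phi t = Lop (\<phi> (app t))" for t
  have PhiR: "Phi x \<in> R" if "x\<in>R" for x unfolding Phi_def using LR[OF AL(1)[OF appR[OF that]]] .
  have appPhi: "app (Phi x) = \<phi> (app x)" if "x\<in>R" for x unfolding Phi_def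
    using Lapp[OF AL(1)[OF appR[OF that]]] .
  have appplus: "app (x + y) = (\<lambda>z. app x z + app y z)" for x y by (simp add: lop_simps)
  have appscale: "app (a *\<^sub>R x) = (\<lambda>z. a *\<^sub>R app x z)" for a x by (simp add: lop_simps)
  have apptimes: "app (x * y) = app x \<circ> app y" for x y by (simp add: lop_simps)
  have minidEx: "minid R (Lop (E.Ex u))" if u1: "f1 u = 1" and u0: "f1 (J0 u) = 0" for u
  proof -
    have PR: "Lop (E.Ex u) \<in> R" using LR[OF ExA] .
    have PP: "Lop (E.Ex u) * Lop (E.Ex u) = Lop (E.Ex u)"
      by (rule app_eqI) (simp add: lop_simps Lapp[OF ExA] E.Ex_idem[OF u1 u0])
    have l1: "T = 0 \<or> x = 0" if T: "T\<in>R" and x: "x\<in>R" and h: "T = T * Lop (E.Ex u)" "x = Lop (E.Ex u) * x" "T * x = 0" for T x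
    proof -
      have a: "app T = app T \<circ> E.Ex u" using arg_cong[OF h(1), of app] by (simp add: lop_simps Lapp[OF ExA])
      have b: "app x = E.Ex u \<circ> app x" using arg_cong[OF h(2), of app] by (simp add: lop_simps Lapp[OF ExA])
      have c: "app T \<circ> app x = (\<lambda>_. 0)" using arg_cong[OF h(3), of app] by (simp add: lop_simps)
      from E.L1[OF u1 u0 linR Acomm[OF appR[OF T]] linR a b c]
      have "app T = app 0 \<or> app x = app 0" by (simp add: zero_lop.rep_eq)
      thus ?thesis by (simp add: app_inject)
    qed
    have l2: "T = 0 \<or> n = 0" if T: "T\<in>R" and n: "n\<in>R" and h: "T = Lop (E.Ex u) * T" "n = n * Lop (E.Ex u)" "n * T = 0" for T n
    proof -
      have a: "app T = E.Ex u \<circ> app T" using arg_cong[OF h(1), of app] by (simp add: lop_simps Lapp[OF ExA])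
      have b: "app n = app n \<circ> E.Ex u" using arg_cong[OF h(2), of app] by (simp add: lop_simps Lapp[OF ExA])
      have c: "app n \<circ> app T = (\<lambda>_. 0)" using arg_cong[OF h(3), of app] by (simp add: lop_simps)
      from E.L2[OF u1 u0 linR linR Acomm[OF appR[OF n]] a b c]
      have "app T = app 0 \<or> app n = app 0" by (simp add: zero_lop.rep_eq)
      thus ?thesis by (simp add: app_inject)
    qed
    show ?thesis unfolding minid_def
    proof (intro conjI ballI impI)
      fix T x assume T: "T\<in>R" and x: "x\<in>R" and h: "T = T * Lop (E.Ex u) \<and> x = Lop (E.Ex u) * x \<and> T * x = 0"
      show "T = 0 \<or> x = 0" using l1[OF T x conjunct1[OF h] conjunct1[OF conjunct2[OF h]] conjunct2[OF conjunct2[OF h]]] .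
    next
      fix T x assume T: "T\<in>R" and x: "x\<in>R" and h: "T = Lop (E.Ex u) * T \<and> x = x * Lop (E.Ex u) \<and> x * T = 0"
      show "T = 0 \<or> x = 0" using l2[OF T x conjunct1[OF h] conjunct1[OF conjunct2[OF h]] conjunct2[OF conjunct2[OF h]]] .
    qed (rule PR, rule PP)
  qed
  have zp: "zp R jj Phi {Lop (E.Ex x) | x. True}"
  proof (rule zp.intro[OF ralg], unfold_locales)
    show "jj \<in> R" by (rule jjR)
  next
    fix x assume "x\<in>R" thus "jj * x = x * jj" by (rule jjc)
  next
    fix x assume "x\<in>R" thus "Phi x \<in> R" by (rule PhiR)
  next
    fix x y assume x: "x\<in>R" and y: "y\<in>R"
    have xy: "x + y \<in> R" using ralg.addR[OF ralg x y] .
    show "Phi (x + y) = Phi x + Phi y"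
      by (rule app_eqI) (simp add: appPhi[OF xy] appPhi[OF x] appPhi[OF y] appplus AL(2)[OF appR[OF x] appR[OF y]])
  next
    fix x a assume x: "x\<in>R"
    have xa: "a *\<^sub>R x \<in> R" using ralg.sclR[OF ralg x] .
    show "Phi (a *\<^sub>R x) = a *\<^sub>R Phi x"
      by (rule app_eqI) (simp add: appPhi[OF xa] appPhi[OF x] appscale AL(3)[OF appR[OF x]])
  next
    fix x assume x: "x\<in>R"
    show "Phi (jj * x) = jj * Phi x"
    proof (cases "C = {}")
      case True thus ?thesis unfolding jj_def by simp
    next
      case False
      have J0C: "J0 \<in> C" using JC False by auto
      have jx: "Lop J0 * x \<in> R" using ralg.mulR[OF ralg LR[OF J0A[OF False]] x] .
      show ?thesis
        by (rule app_eqI) (simp add: appPhi[OF jx] appPhi[OF x] apptimes jj_def False Lop_app[OF J0lin] AL(4)[OF J0C appR[OF x]])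
    qed
  next
    fix A B assume A: "A\<in>R" and B: "B\<in>R" and AB: "A * B = 0" and BA: "B * A = 0"
    have ab: "app A \<circ> app B = (\<lambda>x. 0)" using arg_cong[OF AB, of app] by (simp add: lop_simps)
    have ba: "app B \<circ> app A = (\<lambda>x. 0)" using arg_cong[OF BA, of app] by (simp add: lop_simps)
    have j: "(\<lambda>x. jordan (\<phi> (app A)) (app B) x + jordan (app A) (\<phi> (app B)) x) = (\<lambda>x. 0)"
      using zc appR[OF A] appR[OF B] ab ba by blast
    show "Phi A * B + B * Phi A + A * Phi B + Phi B * A = 0"
    proof (rule app_eqI, rule ext)
      fix z
      have "app (Phi A * B + B * Phi A + A * Phi B + Phi B * A) z =
          jordan (\<phi> (app A)) (app B) z + jordan (app A) (\<phi> (app B)) z"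
        by (simp add: lop_simps appPhi[OF A] appPhi[OF B] jordan_def add.assoc)
      also have "\<dots> = 0" using fun_cong[OF j, of z] by simp
      finally show "app (Phi A * B + B * Phi A + A * Phi B + Phi B * A) z = app 0 z" by (simp add: lop_simps)
    qed
  next
    show "{Lop (E.Ex x) | x. True} \<subseteq> R" using LR[OF ExA] by blast
  next
    fix T e assume T: "T\<in>R" and e: "e \<in> {Lop (E.Ex x) | x. True}"
    then obtain x where ex: "e = Lop (E.Ex x)" by blast
    have "T * e = Lop (E.Ex (app T x))"
    proof (rule app_eqI)
      have "app (T * e) = app T \<circ> E.Ex x" unfolding ex by (simp add: lop_simps Lapp[OF ExA])
      also have "\<dots> = E.Ex (app T x)" by (rule E.Ex_comp[OF linR Acomm[OF appR[OF T]]])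
      finally show "app (T * e) = app (Lop (E.Ex (app T x)))" by (simp add: Lapp[OF ExA])
    qed
    thus "T * e \<in> {Lop (E.Ex x) | x. True}" by blast
  next
    fix W assume W: "W\<in>R" and h: "\<forall>e\<in>{Lop (E.Ex x) | x. True}. W * e = 0"
    have "app W x = 0" for x
    proof -
      have "W * Lop (E.Ex x) = 0" using h by blast
      hence "app (W * Lop (E.Ex x)) w = app 0 w" by simp
      thus ?thesis by (simp add: lop_simps Lapp[OF ExA] E.Ex_w)
    qed
    thus "W = 0" by (intro app_eqI ext) (simp add: lop_simps)
  next
    fix e assume "e \<in> {Lop (E.Ex x) | x. True}"
    then obtain x where ex: "e = Lop (E.Ex x)" by blast
    define \<alpha> where "\<alpha> = f1 x"
    define \<beta> where "\<beta> = - f1 (J0 x)"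
    define u1 where "u1 = (x - \<alpha> *\<^sub>R w - \<beta> *\<^sub>R J0 w) + w"
    have xdec: "x = u1 - w + \<alpha> *\<^sub>R w + \<beta> *\<^sub>R J0 w" unfolding u1_def by simp
    have fu1: "f1 u1 = 1" unfolding u1_def \<alpha>_def
      by (simp add: linear_add[OF f1lin] linear_diff[OF f1lin] linear_scale[OF f1lin] fw fJw)
    have fJu1: "f1 (J0 u1) = 0"
      using jz
    proof
      assume "J0 = (\<lambda>x. 0)" thus ?thesis using linear_0[OF f1lin] by simp
    next
      assume J: "\<forall>x. J0 (J0 x) = -x"
      show ?thesis unfolding u1_def \<alpha>_def \<beta>_def using J
        by (simp add: linear_add[OF f1lin] linear_diff[OF f1lin] linear_scale[OF f1lin] linear_neg[OF f1lin]
           linear_add[OF J0lin] linear_diff[OF J0lin] linear_scale[OF J0lin] fw fJw)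
    qed
    have Exdiff: "E.Ex (a - b) = (\<lambda>y. E.Ex a y - E.Ex b y)" for a b
      using E.Ex_add[of a "-b"] E.Ex_scale[of "-1" b] by simp
    have Exdec: "E.Ex x = (\<lambda>y. E.Ex u1 y - E.Ex w y + \<alpha> *\<^sub>R E.Ex w y + \<beta> *\<^sub>R E.Ex (J0 w) y)"
      by (subst xdec) (simp add: E.Ex_add Exdiff E.Ex_scale)
    have mu1: "minid R (Lop (E.Ex u1))" by (rule minidEx[OF fu1 fJu1])
    have mw: "minid R (Lop (E.Ex w))" by (rule minidEx[OF fw fJw])
    show "\<exists>P1 P2 a b. minid R P1 \<and> minid R P2 \<and> e = P1 - P2 + a *\<^sub>R P2 + b *\<^sub>R (jj * P2)"
    proof (cases "C = {}")
      case True
      hence J: "J0 = (\<lambda>x. 0)" using JC unfolding complex_structure_def by auto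
      have ae: "app e = E.Ex x" unfolding ex by (rule Lapp[OF ExA])
      have E0: "E.Ex (J0 w) = (\<lambda>y. 0)" unfolding E.Ex_def by (simp add: J)
      have "e = Lop (E.Ex u1) - Lop (E.Ex w) + \<alpha> *\<^sub>R Lop (E.Ex w) + 0 *\<^sub>R (jj * Lop (E.Ex w))"
        by (rule app_eqI) (simp only: ae, simp add: lop_simps Lapp[OF ExA] Exdec E0)
      thus ?thesis using mu1 mw by blast
    next
      case False
      have "app (Lop J0 * Lop (E.Ex w)) = E.Ex (J0 w)"
        by (simp add: lop_simps Lapp[OF ExA] Lop_app[OF J0lin] E.Ex_comp[OF J0lin])
      moreover have ae: "app e = E.Ex x" unfolding ex by (rule Lapp[OF ExA])
      ultimately have "e = Lop (E.Ex u1) - Lop (E.Ex w) + \<alpha> *\<^sub>R Lop (E.Ex w) + \<beta> *\<^sub>R (jj * Lop (E.Ex w))"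
        unfolding jj_def using False by (intro app_eqI) (simp only: ae, simp add: lop_simps Lapp[OF ExA] Exdec)
      thus ?thesis using mu1 mw by blast
    qed

  qed
  have oneR: "(1::'a lop) \<in> R" using ralg.oneR[OF ralg] .
  have appc: "app (zp.c Phi) = \<phi> id"
    unfolding zp.c_def[OF zp] using appPhi[OF oneR] by (simp add: lop_simps)
  have appDD: "app (zp.DD Phi x) = (\<lambda>z. \<phi> (app x) z - \<phi> id (app x z))" if x: "x\<in>R" for x
    unfolding zp.DD_def[OF zp] by (simp add: lop_simps appPhi[OF x] appc)
  have cent: "\<phi> id \<circ> T = T \<circ> \<phi> id" if T: "T\<in>\<A>" for T
  proof -
    have "zp.c Phi * Lop T = Lop T * zp.c Phi" using zp.c_central[OF zp LR[OF T]] .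
    from arg_cong[OF this, of app] show ?thesis by (simp add: lop_simps appc Lapp[OF T])
  qed
  have leib: "(\<lambda>x. \<phi> (S \<circ> T) x - \<phi> id ((S \<circ> T) x)) =
        (\<lambda>x. (\<phi> S (T x) - \<phi> id (S (T x))) + S (\<phi> T x - \<phi> id (T x)))" if S: "S\<in>\<A>" and T: "T\<in>\<A>" for S T
  proof -
    have ST: "Lop S * Lop T \<in> R" using ralg.mulR[OF ralg LR[OF S] LR[OF T]] .
    have e: "zp.DD Phi (Lop S * Lop T) = zp.DD Phi (Lop S) * Lop T + Lop S * zp.DD Phi (Lop T)"
      using zp.DD_leib[OF zp LR[OF S] LR[OF T]] .
    have "app (zp.DD Phi (Lop S * Lop T)) = app (zp.DD Phi (Lop S) * Lop T + Lop S * zp.DD Phi (Lop T))"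
      using e by simp
    thus ?thesis
      by (simp add: appDD[OF ST] appDD[OF LR[OF S]] appDD[OF LR[OF T]] lop_simps Lapp[OF S] Lapp[OF T])
  qed
  show ?thesis using cent leib by blast
qed


theorem corollary2p10:
  fixes C :: "('a::banach \<Rightarrow> 'a) set" and \<A> :: "('a \<Rightarrow> 'a) set"
    and \<phi> :: "('a \<Rightarrow> 'a) \<Rightarrow> ('a \<Rightarrow> 'a)"
  assumes "scalar_data C"
    and "unital_standard_algebra C \<A>"
    and "alg_linear C \<A> \<phi>"
    and "\<forall>A\<in>\<A>. \<forall>B\<in>\<A>. A \<circ> B = (\<lambda>x. 0) \<and> B \<circ> A = (\<lambda>x. 0) \<longrightarrow>
           (\<lambda>x. jordan (\<phi> A) B x + jordan A (\<phi> B) x) = (\<lambda>x. 0)"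
  shows "(\<exists>\<delta> \<eta>. is_derivation C \<A> \<delta> \<and> is_multiplier C \<A> \<eta> \<and>
            (\<forall>A\<in>\<A>. \<phi> A = (\<lambda>x. \<delta> A x + \<eta> A x)))
       \<and> (\<phi> id = (\<lambda>x. 0) \<longrightarrow> is_derivation C \<A> \<phi>)"
proof (cases "\<exists>z0::'a. z0 \<noteq> 0")
  case False
  have z: "y = 0" for y :: 'a using False by blast
  have alleq: "f = g" for f g :: "'a \<Rightarrow> 'a"
  proof
    fix x show "f x = g x" using z[of "f x"] z[of "g x"] by (rule trans[OF _ sym])
  qed
  have d: "is_derivation C \<A> \<phi>" unfolding is_derivation_def
    by (intro conjI ballI assms(3) alleq)
  have m: "is_multiplier C \<A> \<phi>" unfolding is_multiplier_def
    by (intro conjI ballI assms(3) alleq)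
  have e: "\<forall>A\<in>\<A>. \<phi> A = (\<lambda>x. \<phi> A x + \<phi> A x)" by (intro ballI alleq)
  show ?thesis using d m e by blast
next
  case True
  then obtain z0 :: 'a where z0: "z0 \<noteq> 0" by blast
  note NT = nontrivial_case[OF assms z0]
  have cent: "\<phi> id \<circ> T = T \<circ> \<phi> id" if "T\<in>\<A>" for T using NT that by blast
  have leib: "(\<lambda>x. \<phi> (S \<circ> T) x - \<phi> id ((S \<circ> T) x)) =
        (\<lambda>x. (\<phi> S (T x) - \<phi> id (S (T x))) + S (\<phi> T x - \<phi> id (T x)))" if "S\<in>\<A>" "T\<in>\<A>" for S T
    using NT that by blast
  note U = usa_facts[OF assms(2)]
  note AL = alg_linear_facts[OF assms(3)]
  have blA: "bounded_linear T" if "T\<in>\<A>" for T using U(1) that unfolding bops_def by blast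
  have linA: "linear T" if "T\<in>\<A>" for T using blA[OF that] bounded_linear.linear by blast
  have commA: "T \<circ> J = J \<circ> T" if "T\<in>\<A>" "J\<in>C" for T J using U(1) that unfolding bops_def by blast
  have linC: "linear J" if "J\<in>C" for J
  proof -
    have "C = {J}" "complex_structure J" using assms(1) that unfolding scalar_data_def by auto
    thus ?thesis unfolding complex_structure_def using bounded_linear.linear by blast
  qed
  define cf where "cf = \<phi> id"
  have cfA: "cf \<in> \<A>" unfolding cf_def using AL(1)[OF U(3)] .
  have cflin: "linear cf" using linA[OF cfA] .
  define \<delta> where "\<delta> A = (\<lambda>x::'a. \<phi> A x - cf (A x))" for A
  define \<eta> where "\<eta> A = cf \<circ> (A::'a \<Rightarrow> 'a)" for A
  have compA: "cf \<circ> T \<in> \<A>" if "T\<in>\<A>" for T using U(5)[OF cfA that] .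
  have \<delta>A: "\<delta> T \<in> \<A>" if T: "T\<in>\<A>" for T
  proof -
    have "(\<lambda>x. \<phi> T x + (\<lambda>x. (-1) *\<^sub>R (cf \<circ> T) x) x) \<in> \<A>"
      using U(4)[OF AL(1)[OF T] U(6)[OF compA[OF T]]] .
    moreover have "(\<lambda>x. \<phi> T x + (\<lambda>x. (-1) *\<^sub>R (cf \<circ> T) x) x) = \<delta> T" unfolding \<delta>_def by auto
    ultimately show ?thesis by simp
  qed
  have dal: "alg_linear C \<A> \<delta>" unfolding alg_linear_def
  proof (intro conjI ballI allI)
    fix T assume "T\<in>\<A>" thus "\<delta> T \<in> \<A>" by (rule \<delta>A)
  next
    fix S T assume S: "S\<in>\<A>" and T: "T\<in>\<A>"
    show "\<delta> (\<lambda>x. S x + T x) = (\<lambda>x. \<delta> S x + \<delta> T x)"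
      unfolding \<delta>_def AL(2)[OF S T] by (rule ext) (simp add: linear_add[OF cflin])
  next
    fix c T assume T: "T\<in>\<A>"
    show "\<delta> (\<lambda>x. c *\<^sub>R T x) = (\<lambda>x. c *\<^sub>R \<delta> T x)"
      unfolding \<delta>_def AL(3)[OF T] by (rule ext) (simp add: linear_scale[OF cflin] algebra_simps)
  next
    fix J T assume J: "J\<in>C" and T: "T\<in>\<A>"
    have cj: "cf (J z) = J (cf z)" for z using fun_cong[OF commA[OF cfA J], of z] by simp
    show "\<delta> (J \<circ> T) = J \<circ> \<delta> T"
      unfolding \<delta>_def AL(4)[OF J T] by (rule ext) (simp add: cj linear_diff[OF linC[OF J]])
  qed
  have dleib: "\<delta> (S \<circ> T) = (\<lambda>x. \<delta> S (T x) + S (\<delta> T x))" if S: "S\<in>\<A>" and T: "T\<in>\<A>" for S T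
    using leib[OF S T] unfolding \<delta>_def cf_def .
  have isd: "is_derivation C \<A> \<delta>" unfolding is_derivation_def using dal dleib by blast
  have eal: "alg_linear C \<A> \<eta>" unfolding alg_linear_def
  proof (intro conjI ballI allI)
    fix T assume "T\<in>\<A>" thus "\<eta> T \<in> \<A>" unfolding \<eta>_def by (rule compA)
  next
    fix S T assume S: "S\<in>\<A>" and T: "T\<in>\<A>"
    show "\<eta> (\<lambda>x. S x + T x) = (\<lambda>x. \<eta> S x + \<eta> T x)"
      unfolding \<eta>_def by (rule ext) (simp add: linear_add[OF cflin])
  next
    fix c T assume T: "T\<in>\<A>"
    show "\<eta> (\<lambda>x. c *\<^sub>R T x) = (\<lambda>x. c *\<^sub>R \<eta> T x)"
      unfolding \<eta>_def by (rule ext) (simp add: linear_scale[OF cflin])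
  next
    fix J T assume J: "J\<in>C" and T: "T\<in>\<A>"
    show "\<eta> (J \<circ> T) = J \<circ> \<eta> T"
      unfolding \<eta>_def using commA[OF cfA J] by (metis comp_assoc)
  qed
  have ism: "is_multiplier C \<A> \<eta>" unfolding is_multiplier_def
  proof (intro conjI ballI)
    show "alg_linear C \<A> \<eta>" by (rule eal)
  next
    fix T assume "T\<in>\<A>" thus "\<eta> T = \<eta> id \<circ> T" unfolding \<eta>_def by simp
  next
    fix T assume T: "T\<in>\<A>" thus "\<eta> T = T \<circ> \<eta> id" unfolding \<eta>_def using cent[OF T] unfolding cf_def by simp
  qed
  have dec: "\<phi> A = (\<lambda>x. \<delta> A x + \<eta> A x)" if "A\<in>\<A>" for A unfolding \<delta>_def \<eta>_def by auto
  have part2: "is_derivation C \<A> \<phi>" if z: "\<phi> id = (\<lambda>x. 0)"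
  proof -
    have cf0: "cf = (\<lambda>x. 0)" unfolding cf_def using z .
    have dp: "\<delta> A = \<phi> A" for A unfolding \<delta>_def cf0 by simp
    show ?thesis using isd unfolding is_derivation_def dp using assms(3) by simp
  qed
  show ?thesis using isd ism dec part2 by blast
qed

end
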